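(* Let $\mathcal{R},\mathcal{R}'$ be finite sets with $|\mathcal{R}|=|\mathcal{R}'|$, let $\mathcal{A}$ be a finite set of attributes, for each $a\in\mathcal{A}$ let $\mathcal{V}_a=\mathcal{V}'_a$ be a finite set and $A_a$ a transition probability matrix on $\mathcal{V}_a$ with positive entries, and let $\mathcal{V}=\mathcal{V}'=\prod_{a\in\mathcal{A}}\mathcal{V}_a$. Then the PRAM mechanism with per-attribute transition matrices $A_a$ is a $Pk$-anonymization for $$k=1+(|\mathcal{R}|-1)\prod_{a\in\mathcal{A}}\mathrm{AR}_a,\qquad \mathrm{AR}_a=\min_{u,v\in\mathcal{V}_a,\ u',v'\in\mathcal{V}'_a}\frac{(A_a)_{u,v'}(A_a)_{v,u'}}{(A_a)_{u,u'}(A_a)_{v,v'}}.$$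
   Context: A table on $(\mathcal{R},\mathcal{V})$ is a map $\mathcal{R}\to\mathcal{V}$; $\mathcal{T}$, $\mathcal{T}'$ denote the sets of tables on $(\mathcal{R},\mathcal{V})$ and $(\mathcal{R}',\mathcal{V}')$. For sets $X,Y$, $X\to Y$ is the set of maps $X\to Y$. A privacy mechanism is $(\mathcal{R},\mathcal{V},\mathcal{R}',\mathcal{V}',\Pi,\Delta)$ with $\Pi$ uniformly distributed over bijections $\mathcal{R}\to\mathcal{R}'$ and $\Delta$ a random variable in $\mathcal{T}\to(\mathcal{R}\to\mathcal{V}')$; it is a privacy mechanism from $T$ to $T'$ if $T,\Pi,\Delta$ are mutually independent and $\Delta(T)=T'\circ\Pi$. A transition probability matrix has nonnegative entries and rows summing to 1. The PRAM mechanism with per-attribute matrices $A_a$: for every $\tau\in\mathcal{T}$, the values $(\Delta(\tau))(r)$, $r\in\mathcal{R}$, are independent and $\Pr[(\Delta(\tau))(r)=v']=\prod_{a\in\mathcal{A}}(A_a)_{\tau(r)_a,v'_a}$, where $w_a$ denotes the $a$-component of $w\in\prod_a\mathcal{V}_a$. $(\Delta,\tau')$ is $Pk$-anonymous if for all random variables $T,T'$ such that $\Delta$ is a privacy mechanism from $T$ to $T'$ and all $r\in\mathcal{R},r'\in\mathcal{R}'$, $\Pr[\Pi(r)=r'\mid T'=\tau']\le1/k$; $\Delta$ is a $Pk$-anonymization if $(\Delta,\tau')$ is $Pk$-anonymous for every $\tau'\in\mathcal{T}'$ for which some $\tau\in\mathcal{T}$ has $\Pr[\Delta(\tau)=\tau'\circ\Pi]\ne0$.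 *)

theory Defs
  imports "HOL-Probability.Probability"
begin

definition tables :: "'r set \<Rightarrow> 'a set \<Rightarrow> ('a \<Rightarrow> 'v set) \<Rightarrow> ('r \<Rightarrow> 'a \<Rightarrow> 'v) set" where
  "tables R A Vs = (R \<rightarrow>\<^sub>E PiE A Vs)"

definition bijections :: "'r set \<Rightarrow> 'r2 set \<Rightarrow> ('r \<Rightarrow> 'r2) set" where
  "bijections R R' = {\<pi> \<in> R \<rightarrow>\<^sub>E R'. bij_betw \<pi> R R'}"

definition positive_transition_matrix :: "'v set \<Rightarrow> ('v \<Rightarrow> 'v \<Rightarrow> real) \<Rightarrow> bool" where
  "positive_transition_matrix V M \<longleftrightarrow>
     (\<forall>u\<in>V. \<forall>v\<in>V. M u v > 0) \<and> (\<forall>u\<in>V. (\<Sum>v\<in>V. M u v) = 1)"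

text \<open>A mechanism is given by the joint law Q of (Pi, Delta); Delta maps tables to maps R -> V'.\<close>
type_synonym ('r,'r2,'a,'v) mech =
  "(('r \<Rightarrow> 'r2) \<times> (('r \<Rightarrow> 'a \<Rightarrow> 'v) \<Rightarrow> ('r \<Rightarrow> 'a \<Rightarrow> 'v))) pmf"

definition uniform_Pi :: "'r set \<Rightarrow> 'r2 set \<Rightarrow> ('r,'r2,'a,'v) mech \<Rightarrow> bool" where
  "uniform_Pi R R' Q \<longleftrightarrow> map_pmf fst Q = pmf_of_set (bijections R R')"

definition is_PRAM :: "'r set \<Rightarrow> 'a set \<Rightarrow> ('a \<Rightarrow> 'v set) \<Rightarrow> ('a \<Rightarrow> 'v \<Rightarrow> 'v \<Rightarrow> real)
    \<Rightarrow> ('r,'r2,'a,'v) mech \<Rightarrow> bool" where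
  "is_PRAM R A Vs M Q \<longleftrightarrow>
     (\<forall>\<tau>\<in>tables R A Vs.
        prob_space.indep_vars (measure_pmf Q) (\<lambda>_. count_space UNIV) (\<lambda>r x. (snd x) \<tau> r) R \<and>
        (\<forall>r\<in>R. \<forall>v'\<in>PiE A Vs.
           measure_pmf.prob Q {x. (snd x) \<tau> r = v'} = (\<Prod>a\<in>A. M a (\<tau> r a) (v' a))))"

text \<open>Joint law P of (T, (Pi, Delta), T') such that the mechanism (law Q of (Pi,Delta))
  is a privacy mechanism from T to T'.\<close>
definition privacy_mechanism_from ::
  "'r set \<Rightarrow> 'r2 set \<Rightarrow> 'a set \<Rightarrow> ('a \<Rightarrow> 'v set) \<Rightarrow> ('r,'r2,'a,'v) mech
   \<Rightarrow> (('r \<Rightarrow> 'a \<Rightarrow> 'v) \<times> (('r \<Rightarrow> 'r2) \<times> (('r \<Rightarrow> 'a \<Rightarrow> 'v) \<Rightarrow> ('r \<Rightarrow> 'a \<Rightarrow> 'v))) \<times> ('r2 \<Rightarrow> 'a \<Rightarrow> 'v)) pmf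
   \<Rightarrow> bool" where
  "privacy_mechanism_from R R' A Vs Q P \<longleftrightarrow>
     map_pmf (\<lambda>(t, m, t'). m) P = Q \<and>
     (\<forall>X Y Z. measure_pmf.prob P {(t, (\<pi>, \<delta>), t'). t \<in> X \<and> \<pi> \<in> Y \<and> \<delta> \<in> Z}
        = measure_pmf.prob P {(t, (\<pi>, \<delta>), t'). t \<in> X}
          * measure_pmf.prob P {(t, (\<pi>, \<delta>), t'). \<pi> \<in> Y}
          * measure_pmf.prob P {(t, (\<pi>, \<delta>), t'). \<delta> \<in> Z}) \<and>
     (\<forall>(t, (\<pi>, \<delta>), t') \<in> set_pmf P.
        t \<in> tables R A Vs \<and> t' \<in> tables R' A Vs \<and> (\<forall>r\<in>R. \<delta> t r = t' (\<pi> r)))"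

definition cond_prob_pmf :: "'x pmf \<Rightarrow> 'x set \<Rightarrow> 'x set \<Rightarrow> real" where
  "cond_prob_pmf P E F = measure_pmf.prob P (E \<inter> F) / measure_pmf.prob P F"

definition Pk_anonymous ::
  "'r set \<Rightarrow> 'r2 set \<Rightarrow> 'a set \<Rightarrow> ('a \<Rightarrow> 'v set) \<Rightarrow> ('r,'r2,'a,'v) mech
   \<Rightarrow> ('r2 \<Rightarrow> 'a \<Rightarrow> 'v) \<Rightarrow> real \<Rightarrow> bool" where
  "Pk_anonymous R R' A Vs Q \<tau>' k \<longleftrightarrow>
     (\<forall>P. privacy_mechanism_from R R' A Vs Q P \<longrightarrow>
        (\<forall>r\<in>R. \<forall>r'\<in>R'.
           cond_prob_pmf P {(t, (\<pi>, \<delta>), t'). \<pi> r = r'} {(t, (\<pi>, \<delta>), t'). t' = \<tau>'} \<le> 1 / k))"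

definition Pk_anonymization ::
  "'r set \<Rightarrow> 'r2 set \<Rightarrow> 'a set \<Rightarrow> ('a \<Rightarrow> 'v set) \<Rightarrow> ('r,'r2,'a,'v) mech \<Rightarrow> real \<Rightarrow> bool" where
  "Pk_anonymization R R' A Vs Q k \<longleftrightarrow>
     (\<forall>\<tau>'\<in>tables R' A Vs.
        (\<exists>\<tau>\<in>tables R A Vs. measure_pmf.prob Q {(\<pi>, \<delta>). \<forall>r\<in>R. \<delta> \<tau> r = \<tau>' (\<pi> r)} \<noteq> 0)
        \<longrightarrow> Pk_anonymous R R' A Vs Q \<tau>' k)"

definition AR :: "'v set \<Rightarrow> ('v \<Rightarrow> 'v \<Rightarrow> real) \<Rightarrow> real" where
  "AR V M = Min {M u v' * M v u' / (M u u' * M v v') | u v u' v'.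
                   u \<in> V \<and> v \<in> V \<and> u' \<in> V \<and> v' \<in> V}"

end

theory Submission
  imports Defs "HOL-Combinatorics.Transposition"
begin

lemma prod_split2:
  fixes f :: "'r \<Rightarrow> 'r2 \<Rightarrow> real"
  assumes "finite R" "r \<in> R" "s \<in> R" "s \<noteq> r"
  shows "(\<Prod>x\<in>R. f x (g x)) = f r (g r) * f s (g s) * (\<Prod>x\<in>R-{r}-{s}. f x (g x))"
proof -
  have "(\<Prod>x\<in>R. f x (g x)) = f r (g r) * (\<Prod>x\<in>R-{r}. f x (g x))"
    using assms by (simp add: prod.remove)
  also have "(\<Prod>x\<in>R-{r}. f x (g x)) = f s (g s) * (\<Prod>x\<in>R-{r}-{s}. f x (g x))"
    using assms by (subst prod.remove[of _ s]) auto
  finally show ?thesis by simp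
qed

lemma swap_key:
  fixes f :: "'r \<Rightarrow> 'r2 \<Rightarrow> real"
  assumes fin: "finite R" "finite R'" and rR: "r \<in> R"
    and nn: "\<forall>x\<in>R. \<forall>y\<in>R'. f x y \<ge> 0"
    and sw: "\<forall>x\<in>R. \<forall>s\<in>R. \<forall>u\<in>R'. \<forall>v\<in>R'. f x v * f s u \<ge> c * (f x u * f s v)"
  shows "(1 + (real (card R) - 1) * c) * (\<Sum>\<pi>\<in>{\<pi>\<in>bijections R R'. \<pi> r = r'}. \<Prod>x\<in>R. f x (\<pi> x))
          \<le> (\<Sum>\<pi>\<in>bijections R R'. \<Prod>x\<in>R. f x (\<pi> x))"
proof -
  define B where "B = bijections R R'"
  define E where "E = {\<pi>\<in>B. \<pi> r = r'}"
  define w where "w = (\<lambda>\<pi>. \<Prod>x\<in>R. f x (\<pi> x))"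
  define g where "g = (\<lambda>(\<pi>::'r\<Rightarrow>'r2, s). \<pi> \<circ> Transposition.transpose r s)"
  have finB: "finite B" unfolding B_def bijections_def
    by (rule finite_subset[OF _ finite_PiE[of R "\<lambda>_. R'"]]) (use fin in auto)
  have wnn: "w \<pi> \<ge> 0" if "\<pi> \<in> B" for \<pi>
    using that nn unfolding w_def B_def bijections_def
    by (auto intro!: prod_nonneg simp: bij_betw_def)
  have gB: "g (\<pi>, s) \<in> B - E" if "\<pi> \<in> E" "s \<in> R - {r}" for \<pi> s
  proof -
    have pB: "\<pi> \<in> R \<rightarrow>\<^sub>E R'" "bij_betw \<pi> R R'" "\<pi> r = r'"
      using that unfolding E_def B_def bijections_def by auto
    have "bij_betw (\<pi> \<circ> Transposition.transpose r s) R R'"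
      using pB(2) that(2) rR by (intro bij_betw_trans[OF _ pB(2)]) auto
    moreover have "\<pi> \<circ> Transposition.transpose r s \<in> R \<rightarrow>\<^sub>E R'"
      using pB(1) that(2) rR by (auto simp: PiE_def extensional_def Pi_def Transposition.transpose_def)
    moreover have "(\<pi> \<circ> Transposition.transpose r s) r \<noteq> r'"
      using pB that(2) rR by (auto simp: bij_betw_def inj_on_def)
    ultimately show ?thesis unfolding g_def B_def E_def bijections_def by auto
  qed
  have ginj: "inj_on g (E \<times> (R - {r}))"
  proof (rule inj_onI)
    fix p q assume pq: "p \<in> E \<times> (R - {r})" "q \<in> E \<times> (R - {r})" "g p = g q"
    obtain \<pi>1 s1 \<pi>2 s2 where pq': "p = (\<pi>1, s1)" "q = (\<pi>2, s2)" by fastforce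
    have a: "\<pi>1 \<in> E" "s1 \<in> R - {r}" "\<pi>2 \<in> E" "s2 \<in> R - {r}"
      "g (\<pi>1, s1) = g (\<pi>2, s2)" using pq pq' by auto
    have b: "bij_betw (g (\<pi>1, s1)) R R'" using gB[OF a(1,2)] unfolding B_def bijections_def by auto
    have "g (\<pi>1, s1) s1 = r'" using a(1) unfolding g_def E_def by auto
    moreover have "g (\<pi>2, s2) s2 = r'" using a(3) unfolding g_def E_def by auto
    ultimately have "g (\<pi>1, s1) s1 = r'" "g (\<pi>1, s1) s2 = r'" using a(5) by auto
    hence "s1 = s2" using a b by (auto simp: bij_betw_def inj_on_def)
    moreover have "\<pi>1 = g (\<pi>1, s1) \<circ> Transposition.transpose r s1" "\<pi>2 = g (\<pi>2, s2) \<circ> Transposition.transpose r s2"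
      unfolding g_def by (auto simp: fun_eq_iff)
    ultimately show "p = q" using a(5) pq' by simp
  qed
  have wg: "w (g (\<pi>, s)) \<ge> c * w \<pi>" if "\<pi> \<in> E" "s \<in> R - {r}" for \<pi> s
  proof -
    have pB: "bij_betw \<pi> R R'" "\<pi> r = r'"
      using that unfolding E_def B_def bijections_def by auto
    have inR': "\<pi> x \<in> R'" if "x \<in> R" for x using pB that by (auto simp: bij_betw_def)
    have s: "s \<in> R" "s \<noteq> r" using that by auto
    have rest: "(\<Prod>x\<in>R-{r}-{s}. f x (g (\<pi>, s) x)) = (\<Prod>x\<in>R-{r}-{s}. f x (\<pi> x))"
      by (rule prod.cong) (auto simp: g_def)
    have restnn: "(\<Prod>x\<in>R-{r}-{s}. f x (\<pi> x)) \<ge> 0"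
      using nn inR' by (auto intro!: prod_nonneg)
    have "w (g (\<pi>, s)) = f r (\<pi> s) * f s (\<pi> r) * (\<Prod>x\<in>R-{r}-{s}. f x (\<pi> x))"
      unfolding w_def using prod_split2[OF fin(1) rR s(1) s(2), of f "g (\<pi>, s)"] rest
      by (simp add: g_def)
    also have "\<dots> \<ge> c * (f r (\<pi> r) * f s (\<pi> s)) * (\<Prod>x\<in>R-{r}-{s}. f x (\<pi> x))"
      using sw rR s inR' restnn by (intro mult_right_mono) auto
    finally show ?thesis
      unfolding w_def using prod_split2[OF fin(1) rR s(1) s(2), of f \<pi>]
      by (simp add: mult_ac)
  qed
  have EB: "E \<subseteq> B" unfolding E_def by auto
  have finE: "finite E" using finB EB finite_subset by blast
  have "(real (card R) - 1) * c * sum w E = (\<Sum>\<pi>\<in>E. \<Sum>s\<in>R-{r}. c * w \<pi>)"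
  proof -
    have "card R \<ge> 1" using rR fin card_gt_0_iff by (metis One_nat_def Suc_leI empty_iff)
    hence "real (card R - Suc 0) = real (card R) - 1" by (simp add: of_nat_diff)
    thus ?thesis using rR fin by (simp add: sum_distrib_left sum_distrib_right card_Diff_singleton mult_ac)
  qed
  also have "\<dots> \<le> (\<Sum>\<pi>\<in>E. \<Sum>s\<in>R-{r}. w (g (\<pi>, s)))"
    using wg by (intro sum_mono) auto
  also have "\<dots> = (\<Sum>p\<in>E \<times> (R-{r}). w (g p))"
    by (simp add: sum.cartesian_product)
  also have "\<dots> = sum w (g ` (E \<times> (R-{r})))"
    using ginj by (simp add: sum.reindex)
  also have "\<dots> \<le> sum w (B - E)"
    using gB wnn finB by (intro sum_mono2) auto
  finally have "(real (card R) - 1) * c * sum w E \<le> sum w (B - E)" .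
  moreover have "sum w B = sum w E + sum w (B - E)"
    using finB EB by (metis add.commute sum.subset_diff)
  ultimately show ?thesis unfolding B_def[symmetric] E_def[symmetric] w_def[symmetric]
    by (simp add: algebra_simps)
qed


lemma AR_le:
  assumes fin: "finite V" and pos: "\<forall>u\<in>V. \<forall>v\<in>V. M u v > 0"
    and in4: "u \<in> V" "v \<in> V" "u' \<in> V" "v' \<in> V"
  shows "M u v' * M v u' \<ge> AR V M * (M u u' * M v v')" and "AR V M > 0"
proof -
  define S where "S = {M u v' * M v u' / (M u u' * M v v') | u v u' v'.
                   u \<in> V \<and> v \<in> V \<and> u' \<in> V \<and> v' \<in> V}"
  have S_sub: "S \<subseteq> (\<lambda>(u,v,u',v'). M u v' * M v u' / (M u u' * M v v')) ` (V \<times> V \<times> V \<times> V)"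
    unfolding S_def by force
  have finS: "finite S" using finite_subset[OF S_sub] fin by auto
  have mem: "M u v' * M v u' / (M u u' * M v v') \<in> S" unfolding S_def using in4 by blast
  have AR: "AR V M = Min S" unfolding AR_def S_def by simp
  have "AR V M \<le> M u v' * M v u' / (M u u' * M v v')" using AR Min_le[OF finS mem] by simp
  moreover have "M u u' * M v v' > 0" using pos in4 by auto
  ultimately show "M u v' * M v u' \<ge> AR V M * (M u u' * M v v')"
    by (simp add: pos_le_divide_eq)
  have "S \<noteq> {}" using mem by auto
  hence "Min S \<in> S" using finS by (rule Min_in[rotated])
  moreover have "\<forall>x\<in>S. x > 0" unfolding S_def using pos by auto
  ultimately show "AR V M > 0" using AR by auto
qed


lemma PRAM_prod:
  assumes pr: "is_PRAM R A Vs M Q" and tau: "\<tau> \<in> tables R A Vs" and ne: "R \<noteq> {}"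
    and fin: "finite R" and sig: "\<forall>s\<in>R. \<sigma> s \<in> PiE A Vs"
  shows "measure_pmf.prob Q {x. \<forall>s\<in>R. snd x \<tau> s = \<sigma> s}
         = (\<Prod>s\<in>R. \<Prod>a\<in>A. M a (\<tau> s a) (\<sigma> s a))"
proof -
  have ind: "prob_space.indep_vars (measure_pmf Q) (\<lambda>_. count_space UNIV) (\<lambda>r x. (snd x) \<tau> r) R"
    and marg: "\<forall>r\<in>R. \<forall>v'\<in>PiE A Vs.
           measure_pmf.prob Q {x. (snd x) \<tau> r = v'} = (\<Prod>a\<in>A. M a (\<tau> r a) (v' a))"
    using pr tau unfolding is_PRAM_def by auto
  have isd: "prob_space.indep_sets (measure_pmf Q) (\<lambda>i. {(\<lambda>x. snd x \<tau> i) -` B \<inter> space (measure_pmf Q) | B. B \<in> sets (count_space UNIV)}) R"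
    using ind unfolding prob_space.indep_vars_def2[OF prob_space_measure_pmf] by auto
  have "measure_pmf.prob Q (\<Inter>j\<in>R. (\<lambda>x. snd x \<tau> j) -` {\<sigma> j} \<inter> space (measure_pmf Q))
      = (\<Prod>j\<in>R. measure_pmf.prob Q ((\<lambda>x. snd x \<tau> j) -` {\<sigma> j} \<inter> space (measure_pmf Q)))"
    by (rule prob_space.indep_setsD[OF prob_space_measure_pmf isd subset_refl ne fin]) auto
  moreover have "(\<Inter>j\<in>R. (\<lambda>x. snd x \<tau> j) -` {\<sigma> j} \<inter> space (measure_pmf Q)) = {x. \<forall>s\<in>R. snd x \<tau> s = \<sigma> s}"
    using ne by auto
  moreover have "measure_pmf.prob Q ((\<lambda>x. snd x \<tau> j) -` {\<sigma> j} \<inter> space (measure_pmf Q))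
       = (\<Prod>a\<in>A. M a (\<tau> j a) (\<sigma> j a))" if "j \<in> R" for j
  proof -
    have "(\<lambda>x. snd x \<tau> j) -` {\<sigma> j} \<inter> space (measure_pmf Q) = {x. (snd x) \<tau> j = \<sigma> j}" by auto
    thus ?thesis using marg that sig by auto
  qed
  ultimately show ?thesis by (metis (no_types, lifting) prod.cong)
qed


theorem corollary4:
  fixes R :: "'r set" and R' :: "'r2 set" and A :: "'a set"
    and Vs :: "'a \<Rightarrow> 'v set" and M :: "'a \<Rightarrow> 'v \<Rightarrow> 'v \<Rightarrow> real"
    and Q :: "('r,'r2,'a,'v) mech"
  assumes "finite R" and "finite R'" and "card R = card R'"
    and "finite A"
    and "\<forall>a\<in>A. finite (Vs a)"
    and "\<forall>a\<in>A. positive_transition_matrix (Vs a) (M a)"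
    and "uniform_Pi R R' Q"
    and "is_PRAM R A Vs M Q"
  shows "Pk_anonymization R R' A Vs Q
           (1 + (real (card R) - 1) * (\<Prod>a\<in>A. AR (Vs a) (M a)))"
  unfolding Pk_anonymization_def
proof (intro ballI impI)
  note finR = assms(1) and finR' = assms(2) and cardeq = assms(3) and finA = assms(4)
    and finV = assms(5) and ptm = assms(6) and uni = assms(7) and pram = assms(8)
  fix \<tau>' assume tau': "\<tau>' \<in> tables R' A Vs"
  define c where "c = (\<Prod>a\<in>A. AR (Vs a) (M a))"
  define k where "k = 1 + (real (card R) - 1) * c"
  define B where "B = bijections R R'"
  define Tt where "Tt = tables R A Vs"
  have pos: "\<forall>u\<in>Vs a. \<forall>v\<in>Vs a. M a u v > 0" if "a \<in> A" for a
    using ptm that unfolding positive_transition_matrix_def by auto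
  show "Pk_anonymous R R' A Vs Q \<tau>' (1 + (real (card R) - 1) * (\<Prod>a\<in>A. AR (Vs a) (M a)))"
    unfolding Pk_anonymous_def c_def[symmetric] k_def[symmetric]
  proof (intro allI impI ballI)
    fix P r r' assume pm: "privacy_mechanism_from R R' A Vs Q P" and rR: "r \<in> R" and rR': "r' \<in> R'"
    have PQ: "map_pmf (\<lambda>(t, m, t'). m) P = Q"
      and indep: "\<And>X Y Z. measure_pmf.prob P {(t, (\<pi>, \<delta>), t'). t \<in> X \<and> \<pi> \<in> Y \<and> \<delta> \<in> Z}
        = measure_pmf.prob P {(t, (\<pi>, \<delta>), t'). t \<in> X}
          * measure_pmf.prob P {(t, (\<pi>, \<delta>), t'). \<pi> \<in> Y}
          * measure_pmf.prob P {(t, (\<pi>, \<delta>), t'). \<delta> \<in> Z}"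
      and supp: "\<forall>(t, (\<pi>, \<delta>), t') \<in> set_pmf P.
        t \<in> tables R A Vs \<and> t' \<in> tables R' A Vs \<and> (\<forall>r\<in>R. \<delta> t r = t' (\<pi> r))"
      using pm unfolding privacy_mechanism_from_def by auto
    have Vne: "Vs a \<noteq> {}" if "a \<in> A" for a
    proof -
      have "\<tau>' r' \<in> PiE A Vs" using tau' rR' unfolding tables_def by auto
      thus ?thesis using that by auto
    qed
    have ARpos: "AR (Vs a) (M a) > 0" if aA: "a \<in> A" for a
    proof -
      obtain u where "u \<in> Vs a" using Vne[OF aA] by auto
      thus ?thesis using AR_le(2)[OF _ pos[OF aA]] finV aA by blast
    qed
    have c0: "c \<ge> 0" unfolding c_def using ARpos by (intro prod_nonneg) (auto intro: less_imp_le)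
    have k0: "k > 0"
    proof -
      have "card R \<ge> 1" using rR finR card_gt_0_iff by (metis One_nat_def Suc_leI empty_iff)
      hence "real (card R) - 1 \<ge> 0" by simp
      thus ?thesis unfolding k_def using c0 by (smt (verit) mult_nonneg_nonneg)
    qed
    have finB: "finite B" unfolding B_def bijections_def
      by (rule finite_subset[OF _ finite_PiE[of R "\<lambda>_. R'"]]) (use finR' finR in auto)
    have Bne: "B \<noteq> {}"
    proof -
      obtain h where "bij_betw h R R'" using finite_same_card_bij[OF finR finR' cardeq] by auto
      hence "restrict h R \<in> B" unfolding B_def bijections_def
        by (auto simp: bij_betw_def inj_on_def)
      thus ?thesis by auto
    qed
    have finTt: "finite Tt" unfolding Tt_def tables_def
      using finR finA finV by (intro finite_PiE) (auto intro!: finite_PiE)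
    have Qfst: "map_pmf fst Q = pmf_of_set B" using uni unfolding uniform_Pi_def B_def by simp
    have suppB: "fst (fst (snd x)) \<in> B" if "x \<in> set_pmf P" for x
    proof -
      have "fst ((\<lambda>(t, m, t'). m) x) \<in> set_pmf (map_pmf fst (map_pmf (\<lambda>(t, m, t'). m) P))"
        using that by auto
      hence "fst ((\<lambda>(t, m, t'). m) x) \<in> B" using Qfst PQ finB Bne by simp
      thus ?thesis by (auto split: prod.splits)
    qed
    have Ppi: "measure_pmf.prob P {(t, (\<pi>, \<delta>), t'). \<pi> \<in> {\<pi>0}} = 1 / real (card B)" if "\<pi>0 \<in> B" for \<pi>0
    proof -
      have "measure_pmf.prob P {(t, (\<pi>, \<delta>), t'). \<pi> \<in> {\<pi>0}}
          = measure_pmf.prob (map_pmf fst (map_pmf (\<lambda>(t, m, t'). m) P)) {\<pi>0}"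
        by (simp add: vimage_def case_prod_beta) (rule arg_cong[where f="measure_pmf.prob P"], auto)
      also have "\<dots> = 1 / real (card B)" using Qfst PQ finB Bne that
        by (simp add: measure_pmf_of_set)
      finally show ?thesis .
    qed
    have Pdelta: "measure_pmf.prob P {(t, (\<pi>, \<delta>), t'). \<delta> \<in> Z} = measure_pmf.prob Q {x. snd x \<in> Z}" for Z
    proof -
      have "measure_pmf.prob P {(t, (\<pi>, \<delta>), t'). \<delta> \<in> Z}
          = measure_pmf.prob (map_pmf snd (map_pmf (\<lambda>(t, m, t'). m) P)) Z"
        by (simp add: vimage_def case_prod_beta) (rule arg_cong[where f="measure_pmf.prob P"], auto)
      also have "\<dots> = measure_pmf.prob Q {x. snd x \<in> Z}" using PQ by (simp add: vimage_def)
      finally show ?thesis .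
    qed
    define Z where "Z = (\<lambda>\<tau> (\<pi>0::'r\<Rightarrow>'r2). {\<delta>::('r\<Rightarrow>'a\<Rightarrow>'v)\<Rightarrow>('r\<Rightarrow>'a\<Rightarrow>'v). \<forall>s\<in>R. \<delta> \<tau> s = \<tau>' (\<pi>0 s)})"
    define Apc where "Apc = (\<lambda>(\<tau>, \<pi>0). {(t, (\<pi>, \<delta>), t'::'r2\<Rightarrow>'a\<Rightarrow>'v). t \<in> {\<tau>} \<and> \<pi> \<in> {\<pi>0} \<and> \<delta> \<in> Z \<tau> \<pi>0})"
    define f where "f = (\<lambda>(\<tau>::'r\<Rightarrow>'a\<Rightarrow>'v) (s::'r) (y::'r2). \<Prod>a\<in>A. M a (\<tau> s a) (\<tau>' y a))"
    define q where "q = (\<lambda>\<tau> (\<pi>0::'r\<Rightarrow>'r2). \<Prod>s\<in>R. f \<tau> s (\<pi>0 s))"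
    define pT where "pT = (\<lambda>\<tau>. measure_pmf.prob P {(t, (\<pi>, \<delta>), t'). t \<in> {\<tau>}})"
    define BE where "BE = {\<pi>\<in>B. \<pi> r = r'}"
    have tau'v: "\<tau>' y \<in> PiE A Vs" if "y \<in> R'" for y using tau' that unfolding tables_def by auto
    have Bv: "\<pi>0 s \<in> R'" if "\<pi>0 \<in> B" "s \<in> R" for \<pi>0 s
      using that unfolding B_def bijections_def by auto
    have probA: "measure_pmf.prob P (Apc (\<tau>,\<pi>0)) = pT \<tau> * (1 / real (card B)) * q \<tau> \<pi>0"
      if tT: "\<tau> \<in> Tt" and pB: "\<pi>0 \<in> B" for \<tau> \<pi>0
    proof -
      have "measure_pmf.prob Q {x. snd x \<in> Z \<tau> \<pi>0} = measure_pmf.prob Q {x. \<forall>s\<in>R. snd x \<tau> s = (\<tau>' \<circ> \<pi>0) s}"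
        unfolding Z_def by simp
      also have "\<dots> = q \<tau> \<pi>0" unfolding q_def f_def
        using PRAM_prod[OF pram tT[unfolded Tt_def], of "\<tau>' \<circ> \<pi>0"] rR finR tau'v Bv[OF pB] by auto
      finally have "measure_pmf.prob Q {x. snd x \<in> Z \<tau> \<pi>0} = q \<tau> \<pi>0" .
      moreover have "measure_pmf.prob P (Apc (\<tau>,\<pi>0)) = pT \<tau> * measure_pmf.prob P {(t, (\<pi>, \<delta>), t'). \<pi> \<in> {\<pi>0}}
          * measure_pmf.prob P {(t, (\<pi>, \<delta>), t'). \<delta> \<in> Z \<tau> \<pi>0}"
        unfolding Apc_def pT_def by (simp only: prod.case) (rule indep)
      ultimately show ?thesis using Ppi[OF pB] Pdelta by simp
    qed
    have key: "k * (\<Sum>\<pi>0\<in>BE. q \<tau> \<pi>0) \<le> (\<Sum>\<pi>0\<in>B. q \<tau> \<pi>0)" if tT: "\<tau> \<in> Tt" for \<tau>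
    proof -
      have tv: "\<tau> x \<in> PiE A Vs" if "x \<in> R" for x using tT that unfolding Tt_def tables_def by auto
      have nn: "\<forall>x\<in>R. \<forall>y\<in>R'. f \<tau> x y \<ge> 0" unfolding f_def
      proof (intro ballI prod_nonneg)
        fix x y a assume "x \<in> R" "y \<in> R'" "a \<in> A"
        thus "0 \<le> M a (\<tau> x a) (\<tau>' y a)" using tv tau'v pos
          by (meson PiE_mem less_imp_le)
      qed
      have sw: "\<forall>x\<in>R. \<forall>s\<in>R. \<forall>u\<in>R'. \<forall>v\<in>R'. f \<tau> x v * f \<tau> s u \<ge> c * (f \<tau> x u * f \<tau> s v)"
      proof (intro ballI)
        fix x s u v assume xs: "x \<in> R" "s \<in> R" and uv: "u \<in> R'" "v \<in> R'"
        have "c * (f \<tau> x u * f \<tau> s v) = (\<Prod>a\<in>A. AR (Vs a) (M a) * (M a (\<tau> x a) (\<tau>' u a) * M a (\<tau> s a) (\<tau>' v a)))"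
          unfolding c_def f_def by (simp add: prod.distrib)
        also have "\<dots> \<le> (\<Prod>a\<in>A. M a (\<tau> x a) (\<tau>' v a) * M a (\<tau> s a) (\<tau>' u a))"
        proof (rule prod_mono, rule conjI)
          fix a assume aA: "a \<in> A"
          have mem: "\<tau> x a \<in> Vs a" "\<tau> s a \<in> Vs a" "\<tau>' u a \<in> Vs a" "\<tau>' v a \<in> Vs a"
            using tv[OF xs(1)] tv[OF xs(2)] tau'v[OF uv(1)] tau'v[OF uv(2)] aA by auto
          show "AR (Vs a) (M a) * (M a (\<tau> x a) (\<tau>' u a) * M a (\<tau> s a) (\<tau>' v a))
                \<le> M a (\<tau> x a) (\<tau>' v a) * M a (\<tau> s a) (\<tau>' u a)"
            using AR_le(1)[OF _ pos[OF aA] mem] finV aA by blast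
          show "0 \<le> AR (Vs a) (M a) * (M a (\<tau> x a) (\<tau>' u a) * M a (\<tau> s a) (\<tau>' v a))"
            using ARpos[OF aA] pos[OF aA] mem by (intro mult_nonneg_nonneg) (auto intro: less_imp_le)
        qed
        also have "\<dots> = f \<tau> x v * f \<tau> s u" unfolding f_def by (simp add: prod.distrib)
        finally show "f \<tau> x v * f \<tau> s u \<ge> c * (f \<tau> x u * f \<tau> s v)" .
      qed
      show ?thesis using swap_key[OF finR finR' rR nn sw, of r'] unfolding k_def q_def BE_def B_def
        by simp
    qed
    define E where "E = {(t::'r\<Rightarrow>'a\<Rightarrow>'v, (\<pi>::'r\<Rightarrow>'r2, \<delta>::('r\<Rightarrow>'a\<Rightarrow>'v)\<Rightarrow>('r\<Rightarrow>'a\<Rightarrow>'v)), t'::'r2\<Rightarrow>'a\<Rightarrow>'v). \<pi> r = r'}"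
    define F where "F = {(t::'r\<Rightarrow>'a\<Rightarrow>'v, (\<pi>::'r\<Rightarrow>'r2, \<delta>::('r\<Rightarrow>'a\<Rightarrow>'v)\<Rightarrow>('r\<Rightarrow>'a\<Rightarrow>'v)), t'::'r2\<Rightarrow>'a\<Rightarrow>'v). t' = \<tau>'}"
    have Fchar: "x \<in> F \<longleftrightarrow> (\<forall>s\<in>R. snd (fst (snd x)) (fst x) s = \<tau>' (fst (fst (snd x)) s))"
      if xP: "x \<in> set_pmf P" for x
    proof -
      obtain t \<pi> \<delta> t' where x: "x = (t, (\<pi>, \<delta>), t')" by (metis prod.collapse)
      have h: "t \<in> tables R A Vs \<and> t' \<in> tables R' A Vs \<and> (\<forall>r\<in>R. \<delta> t r = t' (\<pi> r))"
        using bspec[OF supp xP[unfolded x]] by simp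
      have st: "t' \<in> tables R' A Vs" and sd: "\<forall>s\<in>R. \<delta> t s = t' (\<pi> s)" using h by blast+
      have pB: "\<pi> \<in> B" using suppB[OF xP] unfolding x by simp
      hence bij: "bij_betw \<pi> R R'" unfolding B_def bijections_def by blast
      have "t' = \<tau>' \<longleftrightarrow> (\<forall>s\<in>R. \<delta> t s = \<tau>' (\<pi> s))"
      proof
        assume as: "\<forall>s\<in>R. \<delta> t s = \<tau>' (\<pi> s)"
        show "t' = \<tau>'"
        proof
          fix y show "t' y = \<tau>' y"
          proof (cases "y \<in> R'")
            case True
            then obtain s where s: "s \<in> R" "\<pi> s = y" using bij unfolding bij_betw_def by blast
            have "t' (\<pi> s) = \<tau>' (\<pi> s)" using sd as s(1) by metis
            thus ?thesis using s(2) by simp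
          next
            case False
            have "t' y = undefined" using st False unfolding tables_def by (rule PiE_arb)
            moreover have "\<tau>' y = undefined" using tau' False unfolding tables_def by (rule PiE_arb)
            ultimately show ?thesis by simp
          qed
        qed
      next
        assume "t' = \<tau>'"
        thus "\<forall>s\<in>R. \<delta> t s = \<tau>' (\<pi> s)" using sd by simp
      qed
      thus ?thesis unfolding F_def x by simp
    qed
    have setF: "F \<inter> set_pmf P = (\<Union>i\<in>Tt \<times> B. Apc i) \<inter> set_pmf P"
    proof (intro equalityI subsetI)
      fix x assume a: "x \<in> F \<inter> set_pmf P"
      hence xP: "x \<in> set_pmf P" by blast
      have c1: "\<forall>s\<in>R. snd (fst (snd x)) (fst x) s = \<tau>' (fst (fst (snd x)) s)"
        using Fchar[OF xP] a by blast
      have "fst x \<in> Tt" using supp xP unfolding Tt_def by (cases x) auto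
      moreover have "fst (fst (snd x)) \<in> B" using suppB[OF xP] .
      ultimately have "x \<in> Apc (fst x, fst (fst (snd x)))" and "(fst x, fst (fst (snd x))) \<in> Tt \<times> B"
        using c1 unfolding Apc_def Z_def by (auto simp: case_prod_beta)
      thus "x \<in> (\<Union>i\<in>Tt \<times> B. Apc i) \<inter> set_pmf P" using xP by blast
    next
      fix x assume "x \<in> (\<Union>i\<in>Tt \<times> B. Apc i) \<inter> set_pmf P"
      then obtain \<tau> \<pi>0 where xP: "x \<in> set_pmf P" and "x \<in> Apc (\<tau>, \<pi>0)" by auto
      hence "\<forall>s\<in>R. snd (fst (snd x)) (fst x) s = \<tau>' (fst (fst (snd x)) s)"
        unfolding Apc_def Z_def by (auto simp: case_prod_beta)
      thus "x \<in> F \<inter> set_pmf P" using Fchar[OF xP] xP by blast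
    qed
    have setEF: "(E \<inter> F) \<inter> set_pmf P = (\<Union>i\<in>Tt \<times> BE. Apc i) \<inter> set_pmf P"
    proof -
      have "(E \<inter> F) \<inter> set_pmf P = E \<inter> (F \<inter> set_pmf P)" by auto
      also have "\<dots> = E \<inter> ((\<Union>i\<in>Tt \<times> B. Apc i) \<inter> set_pmf P)" using setF by simp
      also have "\<dots> = (\<Union>i\<in>Tt \<times> BE. Apc i) \<inter> set_pmf P"
        unfolding E_def Apc_def BE_def by auto
      finally show ?thesis .
    qed
    have disj: "disjoint_family_on Apc I" for I
      unfolding disjoint_family_on_def Apc_def by auto
    have BEB: "BE \<subseteq> B" unfolding BE_def by auto
    have finBE: "finite BE" using finite_subset[OF BEB finB] .
    have union_sum: "measure_pmf.prob P (\<Union>i\<in>I. Apc i) = (\<Sum>i\<in>I. measure_pmf.prob P (Apc i))"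
      if "finite I" for I
      by (rule measure_pmf.finite_measure_finite_Union[OF that _ disj]) auto
    have sumform: "measure_pmf.prob P (\<Union>i\<in>Tt \<times> C. Apc i)
        = (\<Sum>\<tau>\<in>Tt. pT \<tau> * (1 / real (card B)) * (\<Sum>\<pi>0\<in>C. q \<tau> \<pi>0))" if "C \<subseteq> B" for C
    proof -
      have finC: "finite C" using finite_subset[OF that finB] .
      have "measure_pmf.prob P (\<Union>i\<in>Tt \<times> C. Apc i) = (\<Sum>i\<in>Tt \<times> C. measure_pmf.prob P (Apc i))"
        using union_sum[OF finite_cartesian_product[OF finTt finC]] .
      also have "\<dots> = (\<Sum>\<tau>\<in>Tt. \<Sum>\<pi>0\<in>C. measure_pmf.prob P (Apc (\<tau>, \<pi>0)))"
        by (simp add: sum.cartesian_product)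
      also have "\<dots> = (\<Sum>\<tau>\<in>Tt. \<Sum>\<pi>0\<in>C. pT \<tau> * (1 / real (card B)) * q \<tau> \<pi>0)"
        using probA that by (intro sum.cong refl) auto
      also have "\<dots> = (\<Sum>\<tau>\<in>Tt. pT \<tau> * (1 / real (card B)) * (\<Sum>\<pi>0\<in>C. q \<tau> \<pi>0))"
        by (simp add: sum_distrib_left)
      finally show ?thesis .
    qed
    have PF: "measure_pmf.prob P F = (\<Sum>\<tau>\<in>Tt. pT \<tau> * (1 / real (card B)) * (\<Sum>\<pi>0\<in>B. q \<tau> \<pi>0))"
      using measure_Int_set_pmf[of P F] setF sumform[of B] measure_Int_set_pmf[of P "\<Union>i\<in>Tt \<times> B. Apc i"]
      by simp
    have PEF: "measure_pmf.prob P (E \<inter> F) = (\<Sum>\<tau>\<in>Tt. pT \<tau> * (1 / real (card B)) * (\<Sum>\<pi>0\<in>BE. q \<tau> \<pi>0))"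
      using measure_Int_set_pmf[of P "E \<inter> F"] setEF sumform[OF BEB] measure_Int_set_pmf[of P "\<Union>i\<in>Tt \<times> BE. Apc i"]
      by simp
    have ineq: "k * measure_pmf.prob P (E \<inter> F) \<le> measure_pmf.prob P F"
    proof -
      have "k * measure_pmf.prob P (E \<inter> F) = (\<Sum>\<tau>\<in>Tt. pT \<tau> * (1 / real (card B)) * (k * (\<Sum>\<pi>0\<in>BE. q \<tau> \<pi>0)))"
        unfolding PEF sum_distrib_left by (intro sum.cong refl) (simp add: mult_ac)
      also have "\<dots> \<le> (\<Sum>\<tau>\<in>Tt. pT \<tau> * (1 / real (card B)) * (\<Sum>\<pi>0\<in>B. q \<tau> \<pi>0))"
        using key unfolding pT_def by (intro sum_mono mult_left_mono) auto
      finally show ?thesis unfolding PF .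
    qed
    have "cond_prob_pmf P E F \<le> 1 / k"
    proof (cases "measure_pmf.prob P F = 0")
      case True thus ?thesis unfolding cond_prob_pmf_def using k0 by simp
    next
      case False
      hence "measure_pmf.prob P F > 0" by (simp add: zero_less_measure_iff)
      thus ?thesis unfolding cond_prob_pmf_def using ineq k0
        by (simp add: divide_le_eq field_simps)
    qed
    thus "cond_prob_pmf P {(t, (\<pi>, \<delta>), t'). \<pi> r = r'} {(t, (\<pi>, \<delta>), t'). t' = \<tau>'} \<le> 1 / k"
      unfolding E_def F_def .
  qed
qed

end
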